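(* As solutions to the system $S_1=S_2=S_3=T_1=T_2=T_3=0$ (with $S_i,T_i$ as defined in the context), the functions $r,a_1,a_2,b_3$ cannot depend on jet coordinates other than $t,x,u,u_x,u_{xx}$, whereas the functions $b_1,b_2$ cannot depend on jet coordinates other than $t,x,u,u_x,u_{xx},u_{xxx}$.
   Context: Consider a second order scalar evolution equation $u_t = F(t,x,u,u_x,u_{xx})$ with $\partial F/\partial u_{xx} \ne 0$, on its equation manifold with jet coordinates $t,x,u,u_x,u_{xx},u_{xxx},\dots$ and total derivatives $D_x, D_t$. Suppose it has an $\mathfrak{sl}_2$-valued zero-curvature representation $A\,dx + B\,dt$, i.e. $D_t A - D_x B + [A,B] = 0$ on the equation, with characteristic matrix $R$ in the semisimple case: after gauge, $R=\mathrm{diag}(r,-r)$ and $A = \begin{pmatrix} a_1 & a_2 \\ a_2 & -a_1\end{pmatrix}$, $B = \begin{pmatrix} b_1 & b_2+b_3 \\ b_2-b_3 & -b_1\end{pmatrix}$, with $a_2 \ne 0$. The zero-curvature condition and the characteristic-matrix equation then read $S_i = 0 = T_i$, $i=1,2,3$, where $S_1 = -D_t a_1 + D_x b_1 + 2 a_2 b_3$, $S_2 = -D_t a_2 + D_x b_2 - 2 a_1 b_3$, $S_3 = D_x b_3 + 2 a_2 b_1 - 2 a_1 b_2$, $T_1 = -D_t r - \frac{\partial F}{\partial u} r + D_x(\frac{\partial F}{\partial u_x} r) - D_x^2(\frac{\partial F}{\partial u_{xx}} r) - 4 \frac{\partial F}{\partial u_{xx}} r a_2^2$, $T_2 = -b_3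 + 2 \frac{\partial F}{\partial u_{xx}} a_1 a_2$, $T_3 = -b_2 + \frac{\partial F}{\partial u_x} a_2 - 2 D_x(\frac{\partial F}{\partial u_{xx}}) a_2 - 2 \frac{D_x r}{r} \frac{\partial F}{\partial u_{xx}} a_2 - \frac{\partial F}{\partial u_{xx}} D_x a_2$. *)

theory Defs
  imports "HOL-Analysis.Analysis"
begin

text \<open>A point of the (infinite) jet space of the equation manifold is given by
  coordinates t, x and the sequence w, where w k is the jet coordinate
  u_{x...x} (k times x); so w 0 = u, w 1 = u_x, w 2 = u_xx, w 3 = u_xxx, ...\<close>

type_synonym dfun = "real \<Rightarrow> real \<Rightarrow> (nat \<Rightarrow> real) \<Rightarrow> real"

definition depends_upto :: "nat \<Rightarrow> dfun \<Rightarrow> bool" where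
  "depends_upto N f \<longleftrightarrow>
     (\<forall>t x w w'. (\<forall>k\<le>N. w k = w' k) \<longrightarrow> f t x w = f t x w')"

datatype jvar = T | X | U nat

definition pd :: "jvar \<Rightarrow> dfun \<Rightarrow> dfun" where
  "pd v f t x w = (case v of
      T \<Rightarrow> deriv (\<lambda>s. f s x w) t
    | X \<Rightarrow> deriv (\<lambda>s. f t s w) x
    | U k \<Rightarrow> deriv (\<lambda>s. f t x (w(k := s))) (w k))"

definition pdiffble :: "jvar \<Rightarrow> dfun \<Rightarrow> real \<Rightarrow> real \<Rightarrow> (nat \<Rightarrow> real) \<Rightarrow> bool" where
  "pdiffble v f t x w = (case v of
      T \<Rightarrow> (\<lambda>s. f s x w) differentiable (at t)
    | X \<Rightarrow> (\<lambda>s. f t s w) differentiable (at x)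
    | U k \<Rightarrow> (\<lambda>s. f t x (w(k := s))) differentiable (at (w k)))"

definition smooth_dfun :: "dfun \<Rightarrow> bool" where
  "smooth_dfun f \<longleftrightarrow> (\<exists>N. depends_upto N f) \<and>
     (\<forall>vs. continuous_on UNIV (\<lambda>(t, x, w). foldr pd vs f t x w) \<and>
            (\<forall>v t x w. pdiffble v (foldr pd vs f) t x w))"

definition dord :: "dfun \<Rightarrow> nat" where
  "dord f = (LEAST N. depends_upto N f)"

definition Dx :: "dfun \<Rightarrow> dfun" where
  "Dx f t x w = pd X f t x w + (\<Sum>k\<le>dord f. w (Suc k) * pd (U k) f t x w)"

text \<open>Total t-derivative D_t on the equation manifold of u_t = F:
  u_t is replaced by F, and u_{t x..x} (k times) by D_x^k F.\<close>
definition Dt :: "dfun \<Rightarrow> dfun \<Rightarrow> dfun" where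
  "Dt F f t x w = pd T f t x w + (\<Sum>k\<le>dord f. (Dx ^^ k) F t x w * pd (U k) f t x w)"

end

theory Submission
  imports Defs
begin
lemma dep_mono: "depends_upto N f \<Longrightarrow> N \<le> M \<Longrightarrow> depends_upto M f"
  unfolding depends_upto_def by (meson order_trans)

lemma dep_const[intro]: "depends_upto N (\<lambda>t x w. c)"
  unfolding depends_upto_def by simp

lemma dep_add[intro]: "depends_upto N f \<Longrightarrow> depends_upto N g \<Longrightarrow> depends_upto N (\<lambda>t x w. f t x w + g t x w)"
  unfolding depends_upto_def by metis
lemma dep_diff[intro]: "depends_upto N f \<Longrightarrow> depends_upto N g \<Longrightarrow> depends_upto N (\<lambda>t x w. f t x w - g t x w)"
  unfolding depends_upto_def by metis
lemma dep_mult[intro]: "depends_upto N f \<Longrightarrow> depends_upto N g \<Longrightarrow> depends_upto N (\<lambda>t x w. f t x w * g t x w)"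
  unfolding depends_upto_def by metis
lemma dep_divide[intro]: "depends_upto N f \<Longrightarrow> depends_upto N g \<Longrightarrow> depends_upto N (\<lambda>t x w. f t x w / g t x w)"
  unfolding depends_upto_def by metis
lemma dep_uminus[intro]: "depends_upto N f \<Longrightarrow> depends_upto N (\<lambda>t x w. - f t x w)"
  unfolding depends_upto_def by metis
lemma dep_power[intro]: "depends_upto N f \<Longrightarrow> depends_upto N (\<lambda>t x w. (f t x w)^k)"
  unfolding depends_upto_def by metis

lemma deriv_const0: "deriv (\<lambda>s. (c::real)) y = 0"
  by (rule DERIV_imp_deriv) (rule DERIV_const)

lemma pd_zero: "depends_upto N f \<Longrightarrow> N < k \<Longrightarrow> pd (U k) f t x w = 0"
proof -
  assume d: "depends_upto N f" and k: "N < k"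
  have "(\<lambda>s. f t x (w(k := s))) = (\<lambda>s. f t x w)"
    using d k unfolding depends_upto_def by auto
  then show ?thesis by (simp add: pd_def deriv_const0)
qed

lemma pd_dep: "depends_upto N f \<Longrightarrow> depends_upto N (pd v f)"
proof -
  assume d: "depends_upto N f"
  show ?thesis unfolding depends_upto_def
  proof (intro allI impI)
    fix t x w w' assume a: "\<forall>k\<le>N. w k = (w' k :: real)"
    show "pd v f t x w = pd v f t x w'"
    proof (cases v)
      case T
      have "(\<lambda>s. f s x w) = (\<lambda>s. f s x w')" using d a unfolding depends_upto_def by auto
      then show ?thesis using T by (simp add: pd_def)
    next
      case X
      have "(\<lambda>s. f t s w) = (\<lambda>s. f t s w')" using d a unfolding depends_upto_def by auto
      then show ?thesis using X by (simp add: pd_def)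
    next
      case (U k)
      show ?thesis
      proof (cases "k \<le> N")
        case True
        have "(\<lambda>s. f t x (w(k:=s))) = (\<lambda>s. f t x (w'(k:=s)))" using d a unfolding depends_upto_def by auto
        then show ?thesis using U True a by (simp add: pd_def)
      next
        case False
        then show ?thesis using U pd_zero[OF d] by simp
      qed
    qed
  qed
qed

lemma dord_le: "depends_upto M f \<Longrightarrow> dord f \<le> M"
  unfolding dord_def by (rule Least_le)
lemma dord_dep: "depends_upto M f \<Longrightarrow> depends_upto (dord f) f"
  unfolding dord_def by (rule LeastI)

lemma Dx_eq: assumes "depends_upto M f"
  shows "Dx f t x w = pd X f t x w + (\<Sum>k\<le>M. w (Suc k) * pd (U k) f t x w)"
proof -
  have "(\<Sum>k\<le>dord f. w (Suc k) * pd (U k) f t x w) = (\<Sum>k\<le>M. w (Suc k) * pd (U k) f t x w)"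
    by (rule sum.mono_neutral_left) (use dord_le[OF assms] pd_zero[OF dord_dep[OF assms]] in auto)
  then show ?thesis by (simp add: Dx_def)
qed

lemma Dt_eq: assumes "depends_upto M f"
  shows "Dt F f t x w = pd T f t x w + (\<Sum>k\<le>M. (Dx ^^ k) F t x w * pd (U k) f t x w)"
proof -
  have "(\<Sum>k\<le>dord f. (Dx ^^ k) F t x w * pd (U k) f t x w) = (\<Sum>k\<le>M. (Dx ^^ k) F t x w * pd (U k) f t x w)"
    by (rule sum.mono_neutral_left) (use dord_le[OF assms] pd_zero[OF dord_dep[OF assms]] in auto)
  then show ?thesis by (simp add: Dt_def)
qed

definition Dxr :: "nat \<Rightarrow> dfun \<Rightarrow> dfun" where
  "Dxr M f t x w = pd X f t x w + (\<Sum>k<M. w (Suc k) * pd (U k) f t x w)"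

lemma Dx_top: "depends_upto M f \<Longrightarrow> Dx f t x w = pd (U M) f t x w * w (Suc M) + Dxr M f t x w"
  by (simp add: Dx_eq Dxr_def lessThan_Suc_atMost[symmetric])

lemma dep_sum: "(\<And>k. k \<in> A \<Longrightarrow> depends_upto N (g k)) \<Longrightarrow> depends_upto N (\<lambda>t x w. \<Sum>k\<in>A. g k t x w)"
  unfolding depends_upto_def by (metis (no_types, lifting) sum.cong)

lemma dep_w: "k \<le> N \<Longrightarrow> depends_upto N (\<lambda>t x w. w k)"
  unfolding depends_upto_def by auto

lemma Dxr_dep: "depends_upto M f \<Longrightarrow> depends_upto M (Dxr M f)"
proof -
  assume d: "depends_upto M f"
  have "depends_upto M (\<lambda>t x w. pd X f t x w + (\<Sum>k<M. w (Suc k) * pd (U k) f t x w))"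
    by (intro dep_add dep_sum dep_mult pd_dep[OF d] dep_w) auto
  then show ?thesis by (simp add: Dxr_def[abs_def])
qed

definition lintop :: "nat \<Rightarrow> dfun \<Rightarrow> dfun \<Rightarrow> bool" where
  "lintop m E A \<longleftrightarrow> depends_upto m A \<and>
     (\<exists>B. depends_upto m B \<and> (\<forall>t x w. E t x w = A t x w * w (Suc m) + B t x w))"

lemma lintop_dep: "depends_upto m E \<Longrightarrow> lintop m E (\<lambda>t x w. 0)"
  unfolding lintop_def by (intro conjI dep_const exI[of _ E]) auto

lemma lintop_add: "lintop m E A \<Longrightarrow> lintop m E' A' \<Longrightarrow>
   lintop m (\<lambda>t x w. E t x w + E' t x w) (\<lambda>t x w. A t x w + A' t x w)"
  unfolding lintop_def
  apply (elim conjE exE)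
  subgoal for B B'
    by (intro conjI dep_add exI[of _ "\<lambda>t x w. B t x w + B' t x w"]) (auto simp: algebra_simps)
  done

lemma lintop_diff: "lintop m E A \<Longrightarrow> lintop m E' A' \<Longrightarrow>
   lintop m (\<lambda>t x w. E t x w - E' t x w) (\<lambda>t x w. A t x w - A' t x w)"
  unfolding lintop_def
  apply (elim conjE exE)
  subgoal for B B'
    by (intro conjI dep_diff exI[of _ "\<lambda>t x w. B t x w - B' t x w"]) (auto simp: algebra_simps)
  done

lemma lintop_uminus: "lintop m E A \<Longrightarrow>
   lintop m (\<lambda>t x w. - E t x w) (\<lambda>t x w. - A t x w)"
  unfolding lintop_def
  apply (elim conjE exE)
  subgoal for B
    by (intro conjI dep_uminus exI[of _ "\<lambda>t x w. - B t x w"]) (auto simp: algebra_simps)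
  done

lemma lintop_lmult: "depends_upto m c \<Longrightarrow> lintop m E A \<Longrightarrow>
   lintop m (\<lambda>t x w. c t x w * E t x w) (\<lambda>t x w. c t x w * A t x w)"
  unfolding lintop_def
  apply (elim conjE exE)
  subgoal for B
    by (intro conjI dep_mult exI[of _ "\<lambda>t x w. c t x w * B t x w"]) (auto simp: algebra_simps)
  done

lemma lintop_rmult: "depends_upto m c \<Longrightarrow> lintop m E A \<Longrightarrow>
   lintop m (\<lambda>t x w. E t x w * c t x w) (\<lambda>t x w. A t x w * c t x w)"
  unfolding lintop_def
  apply (elim conjE exE)
  subgoal for B
    by (intro conjI dep_mult exI[of _ "\<lambda>t x w. B t x w * c t x w"]) (auto simp: algebra_simps)
  done

lemma lintop_cong: "lintop m E A \<Longrightarrow> (\<And>t x w. E' t x w = E t x w) \<Longrightarrow> (\<And>t x w. A' t x w = A t x w)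
   \<Longrightarrow> lintop m E' A'"
proof -
  assume "lintop m E A" "\<And>t x w. E' t x w = E t x w" "\<And>t x w. A' t x w = A t x w"
  then have "E' = E" "A' = A" by (auto intro!: ext)
  then show ?thesis using \<open>lintop m E A\<close> by simp
qed

lemma lintop_zero: "lintop m E A \<Longrightarrow> (\<forall>t x w. E t x w = 0) \<Longrightarrow> A t x w = 0"
proof -
  assume l: "lintop m E A" and z: "\<forall>t x w. E t x w = 0"
  obtain B where dA: "depends_upto m A" and dB: "depends_upto m B"
    and e: "\<And>t x w. E t x w = A t x w * w (Suc m) + B t x w"
    using l unfolding lintop_def by blast
  define w' where "w' = w(Suc m := w (Suc m) + 1)"
  have "A t x w' = A t x w" "B t x w' = B t x w"
    using dA dB unfolding depends_upto_def w'_def by auto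
  moreover have "A t x w * w (Suc m) + B t x w = 0" "A t x w' * w' (Suc m) + B t x w' = 0"
    using z e by metis+
  moreover have "w' (Suc m) = w (Suc m) + 1" by (simp add: w'_def)
  ultimately show ?thesis by (simp add: algebra_simps)
qed

lemma lintop_pd: "lintop m E A \<Longrightarrow> pd (U (Suc m)) E t x w = A t x w"
proof -
  assume l: "lintop m E A"
  obtain B where dA: "depends_upto m A" and dB: "depends_upto m B"
    and e: "\<And>t x w. E t x w = A t x w * w (Suc m) + B t x w"
    using l unfolding lintop_def by blast
  have "(\<lambda>s. E t x (w(Suc m := s))) = (\<lambda>s. A t x w * s + B t x w)"
  proof
    fix s
    have "A t x (w(Suc m := s)) = A t x w" "B t x (w(Suc m := s)) = B t x w"
      using dA dB unfolding depends_upto_def by auto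
    then show "E t x (w(Suc m := s)) = A t x w * s + B t x w" using e by simp
  qed
  moreover have "deriv (\<lambda>s. A t x w * s + B t x w) (w (Suc m)) = A t x w"
    by (rule DERIV_imp_deriv) (auto intro!: derivative_eq_intros)
  ultimately show ?thesis by (simp add: pd_def)
qed

lemma lintop_depSuc: "lintop m E A \<Longrightarrow> depends_upto (Suc m) E"
proof -
  assume l: "lintop m E A"
  obtain B where dA: "depends_upto m A" and dB: "depends_upto m B"
    and e: "\<And>t x w. E t x w = A t x w * w (Suc m) + B t x w"
    using l unfolding lintop_def by blast
  have "depends_upto (Suc m) (\<lambda>t x w. A t x w * w (Suc m) + B t x w)"
    by (intro dep_add dep_mult dep_w dep_mono[OF dA] dep_mono[OF dB]) auto
  moreover have "E = (\<lambda>t x w. A t x w * w (Suc m) + B t x w)" using e by (auto intro!: ext)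
  ultimately show ?thesis by simp
qed

lemma lintop_Dx: "depends_upto m f \<Longrightarrow> lintop m (Dx f) (pd (U m) f)"
  unfolding lintop_def
  by (intro conjI pd_dep exI[of _ "Dxr m f"] Dxr_dep) (auto simp: Dx_top)

lemma Dx_dep: "depends_upto m f \<Longrightarrow> depends_upto (Suc m) (Dx f)"
  by (rule lintop_depSuc[OF lintop_Dx])

lemma lintop_Dx2: "lintop m E A \<Longrightarrow> lintop (Suc m) (Dx E) A"
proof -
  assume l: "lintop m E A"
  have d: "depends_upto (Suc m) E" by (rule lintop_depSuc[OF l])
  have "lintop (Suc m) (Dx E) (pd (U (Suc m)) E)" by (rule lintop_Dx[OF d])
  moreover have "\<And>t x w. pd (U (Suc m)) E t x w = A t x w" using lintop_pd[OF l] .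
  ultimately show ?thesis using lintop_cong by metis
qed

lemma DxF_dep: "depends_upto 2 F \<Longrightarrow> depends_upto (k + 2) ((Dx ^^ k) F)"
  by (induction k) (auto intro: Dx_dep simp: numeral_2_eq_2)

lemma lintop_DxF: "depends_upto 2 F \<Longrightarrow> 1 \<le> k \<Longrightarrow> lintop (Suc k) ((Dx ^^ k) F) (pd (U 2) F)"
proof (induction k)
  case 0 then show ?case by simp
next
  case (Suc k)
  show ?case
  proof (cases "k = 0")
    case True
    then show ?thesis using lintop_Dx[OF Suc.prems(1)] by (simp add: numeral_2_eq_2)
  next
    case False
    then have "lintop (Suc k) ((Dx ^^ k) F) (pd (U 2) F)" using Suc by simp
    then show ?thesis by (simp add: lintop_Dx2)
  qed
qed

lemma lintop_Dt: assumes F: "depends_upto 2 F" and f: "depends_upto n f" and n: "1 \<le> n"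
  shows "lintop (Suc n) (Dt F f) (\<lambda>t x w. pd (U 2) F t x w * pd (U n) f t x w)"
proof -
  have e: "Dt F f t x w = (pd T f t x w + (\<Sum>k<n. (Dx ^^ k) F t x w * pd (U k) f t x w))
             + (Dx ^^ n) F t x w * pd (U n) f t x w" for t x w
    by (simp add: Dt_eq[OF f] lessThan_Suc_atMost[symmetric])
  have d1: "depends_upto (Suc n) (\<lambda>t x w. pd T f t x w + (\<Sum>k<n. (Dx ^^ k) F t x w * pd (U k) f t x w))"
  proof (intro dep_add dep_sum dep_mult)
    show "depends_upto (Suc n) (pd T f)" by (rule dep_mono[OF pd_dep[OF f]]) simp
    fix k assume "k \<in> {..<n}"
    then show "depends_upto (Suc n) ((Dx ^^ k) F)" by (intro dep_mono[OF DxF_dep[OF F]]) auto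
    show "depends_upto (Suc n) (pd (U k) f)" by (rule dep_mono[OF pd_dep[OF f]]) simp
  qed
  have "lintop (Suc n) (\<lambda>t x w. (pd T f t x w + (\<Sum>k<n. (Dx ^^ k) F t x w * pd (U k) f t x w))
             + (Dx ^^ n) F t x w * pd (U n) f t x w) (\<lambda>t x w. 0 + pd (U 2) F t x w * pd (U n) f t x w)"
    by (intro lintop_add lintop_dep[OF d1] lintop_rmult lintop_DxF[OF F n] dep_mono[OF pd_dep[OF f]]) auto
  then show ?thesis by (rule lintop_cong) (auto simp: e)
qed

lemma pd_cmult: assumes c: "depends_upto m c" and k: "m < k" and g: "pdiffble (U k) g t x w"
  shows "pd (U k) (\<lambda>t x w. c t x w * g t x w) t x w = c t x w * pd (U k) g t x w"
proof -
  have "(\<lambda>s. c t x (w(k:=s)) * g t x (w(k:=s))) = (\<lambda>s. c t x w * g t x (w(k:=s)))"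
    using c k unfolding depends_upto_def by auto
  moreover have "deriv (\<lambda>s. c t x w * g t x (w(k:=s))) (w k) = c t x w * deriv (\<lambda>s. g t x (w(k:=s))) (w k)"
    using g unfolding pdiffble_def
    by (intro DERIV_imp_deriv DERIV_cmult) (simp add: DERIV_deriv_iff_real_differentiable)
  ultimately show ?thesis by (simp add: pd_def)
qed

lemma dep_drop: assumes d: "depends_upto (Suc m) f" and df: "\<forall>t x w. pdiffble (U (Suc m)) f t x w"
  and z: "\<forall>t x w. pd (U (Suc m)) f t x w = 0"
  shows "depends_upto m f"
  unfolding depends_upto_def
proof (intro allI impI)
  fix t x w w' assume a: "\<forall>k\<le>m. w k = (w' k :: real)"
  let ?g = "\<lambda>s. f t x (w(Suc m := s))"
  have "DERIV ?g s :> 0" for s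
  proof -
    have "?g differentiable (at s)" using df[rule_format, of t x "w(Suc m := s)"]
      by (simp add: pdiffble_def)
    then have "DERIV ?g s :> deriv ?g s" by (simp add: DERIV_deriv_iff_real_differentiable)
    moreover have "deriv ?g s = 0" using z[rule_format, of t x "w(Suc m := s)"] by (simp add: pd_def)
    ultimately show ?thesis by simp
  qed
  then have "?g (w (Suc m)) = ?g (w' (Suc m))" by (intro DERIV_isconst_all) blast
  moreover have "f t x (w(Suc m := w' (Suc m))) = f t x w'"
    using d a unfolding depends_upto_def by (auto simp: le_Suc_eq)
  ultimately show "f t x w = f t x w'" by simp
qed

lemma step:
  fixes F r a1 a2 b1 b2 b3 :: dfun
  assumes F: "depends_upto 2 F"
    and F_nondeg: "\<forall>t x w. pd (U 2) F t x w \<noteq> 0"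
    and pr: "\<forall>v t x w. pdiffble v r t x w"
    and pa1: "\<forall>v t x w. pdiffble v a1 t x w"
    and pa2: "\<forall>v t x w. pdiffble v a2 t x w"
    and r_nz: "\<forall>t x w. r t x w \<noteq> 0"
    and a2_nz: "\<forall>t x w. a2 t x w \<noteq> 0"
    and S1: "\<forall>t x w. - Dt F a1 t x w + Dx b1 t x w + 2 * a2 t x w * b3 t x w = 0"
    and S2: "\<forall>t x w. - Dt F a2 t x w + Dx b2 t x w - 2 * a1 t x w * b3 t x w = 0"
    and S3: "\<forall>t x w. Dx b3 t x w + 2 * a2 t x w * b1 t x w - 2 * a1 t x w * b2 t x w = 0"
    and T1: "\<forall>t x w. - Dt F r t x w - pd (U 0) F t x w * r t x w
               + Dx (\<lambda>t x w. pd (U 1) F t x w * r t x w) t x w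
               - Dx (Dx (\<lambda>t x w. pd (U 2) F t x w * r t x w)) t x w
               - 4 * pd (U 2) F t x w * r t x w * (a2 t x w)\<^sup>2 = 0"
    and T2: "\<forall>t x w. - b3 t x w + 2 * pd (U 2) F t x w * a1 t x w * a2 t x w = 0"
    and T3: "\<forall>t x w. - b2 t x w + pd (U 1) F t x w * a2 t x w
               - 2 * Dx (pd (U 2) F) t x w * a2 t x w
               - 2 * (Dx r t x w / r t x w) * pd (U 2) F t x w * a2 t x w
               - pd (U 2) F t x w * Dx a2 t x w = 0"
    and m: "2 \<le> m"
    and dr: "depends_upto (Suc m) r" and da1: "depends_upto (Suc m) a1" and da2: "depends_upto (Suc m) a2"
  shows "depends_upto m r \<and> depends_upto m a1 \<and> depends_upto m a2"
proof -
  have dFv: "depends_upto (Suc m) (pd v F)" for v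
    using dep_mono[OF pd_dep[OF F]] m by simp
  have dFv2: "depends_upto m (pd v F)" for v
    using dep_mono[OF pd_dep[OF F]] m by simp
  let ?F2 = "pd (U 2) F"
  define G2 where "G2 = (\<lambda>t x w. pd (U 2) F t x w * r t x w)"
  have dG2: "depends_upto (Suc m) G2" unfolding G2_def by (intro dep_mult dFv dr)
  have dG1: "depends_upto (Suc m) (\<lambda>t x w. pd (U 1) F t x w * r t x w)" by (intro dep_mult dFv dr)
  have l1: "lintop (Suc (Suc m)) (\<lambda>t x w. - Dt F r t x w - pd (U 0) F t x w * r t x w
               + Dx (\<lambda>t x w. pd (U 1) F t x w * r t x w) t x w
               - Dx (Dx G2) t x w
               - 4 * pd (U 2) F t x w * r t x w * (a2 t x w)\<^sup>2)
      (\<lambda>t x w. - (pd (U 2) F t x w * pd (U (Suc m)) r t x w) - 0 + 0 - pd (U (Suc m)) G2 t x w - 0)"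
  proof (intro lintop_diff lintop_add lintop_uminus)
    show "lintop (Suc (Suc m)) (Dt F r) (\<lambda>t x w. pd (U 2) F t x w * pd (U (Suc m)) r t x w)"
      by (rule lintop_Dt[OF F dr]) simp
    show "lintop (Suc (Suc m)) (\<lambda>t x w. pd (U 0) F t x w * r t x w) (\<lambda>t x w. 0)"
      by (intro lintop_dep dep_mono[OF dep_mult[OF dFv dr]]) simp
    show "lintop (Suc (Suc m)) (Dx (\<lambda>t x w. pd (U 1) F t x w * r t x w)) (\<lambda>t x w. 0)"
      by (intro lintop_dep Dx_dep dG1)
    show "lintop (Suc (Suc m)) (Dx (Dx G2)) (pd (U (Suc m)) G2)"
      by (intro lintop_Dx2 lintop_Dx dG2)
    show "lintop (Suc (Suc m)) (\<lambda>t x w. 4 * pd (U 2) F t x w * r t x w * (a2 t x w)\<^sup>2) (\<lambda>t x w. 0)"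
      by (intro lintop_dep dep_mono[OF dep_mult[OF dep_mult[OF dep_mult[OF dep_const dFv] dr] dep_power[OF da2]]]) simp
  qed
  have rn0: "pd (U (Suc m)) r t x w = 0" for t x w
  proof -
    have "- (?F2 t x w * pd (U (Suc m)) r t x w) - 0 + 0 - pd (U (Suc m)) G2 t x w - 0 = 0"
      by (rule lintop_zero[OF l1]) (use T1 in \<open>simp add: G2_def\<close>)
    moreover have "pd (U (Suc m)) G2 t x w = ?F2 t x w * pd (U (Suc m)) r t x w"
      unfolding G2_def by (rule pd_cmult[OF pd_dep[OF F]]) (use m pr in auto)
    ultimately show ?thesis using F_nondeg by auto
  qed
  have dr': "depends_upto m r"
    using dep_drop[of m r] dr pr rn0 by (metis Suc_eq_plus1)
  have dDxF2: "depends_upto (Suc m) (Dx ?F2)"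
    using Dx_dep[OF pd_dep[OF F], of "U 2"] dep_mono m by (metis Suc_le_mono numeral_2_eq_2 numeral_3_eq_3)
  have dDxr: "depends_upto (Suc m) (Dx r)" by (rule Dx_dep[OF dr'])
  have b2e: "b2 t x w = pd (U 1) F t x w * a2 t x w
               - 2 * Dx (pd (U 2) F) t x w * a2 t x w
               - 2 * (Dx r t x w / r t x w) * pd (U 2) F t x w * a2 t x w
               - pd (U 2) F t x w * Dx a2 t x w" for t x w
    using T3[rule_format, of t x w] by linarith
  have b3e: "b3 t x w = 2 * pd (U 2) F t x w * a1 t x w * a2 t x w" for t x w
    using T2[rule_format, of t x w] by linarith
  have db3: "depends_upto (Suc m) b3"
  proof -
    have "depends_upto (Suc m) (\<lambda>t x w. 2 * pd (U 2) F t x w * a1 t x w * a2 t x w)"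
      by (intro dep_mult dep_const dFv da1 da2)
    moreover have "b3 = (\<lambda>t x w. 2 * pd (U 2) F t x w * a1 t x w * a2 t x w)" using b3e by (auto intro!: ext)
    ultimately show ?thesis by simp
  qed
  have lb2: "lintop (Suc m) b2 (\<lambda>t x w. 0 - 0 - 0 - pd (U 2) F t x w * pd (U (Suc m)) a2 t x w)"
  proof (rule lintop_cong[OF _ b2e])
    show "lintop (Suc m) (\<lambda>t x w. pd (U 1) F t x w * a2 t x w
               - 2 * Dx (pd (U 2) F) t x w * a2 t x w
               - 2 * (Dx r t x w / r t x w) * pd (U 2) F t x w * a2 t x w
               - pd (U 2) F t x w * Dx a2 t x w)
          (\<lambda>t x w. 0 - 0 - 0 - pd (U 2) F t x w * pd (U (Suc m)) a2 t x w)"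
      by (intro lintop_diff lintop_dep lintop_lmult lintop_Dx dep_mult dep_divide dep_const dFv da2 dDxF2 dDxr dr)
  qed simp
  have l2: "lintop (Suc (Suc m)) (\<lambda>t x w. - Dt F a2 t x w + Dx b2 t x w - 2 * a1 t x w * b3 t x w)
      (\<lambda>t x w. - (pd (U 2) F t x w * pd (U (Suc m)) a2 t x w) + (0 - 0 - 0 - pd (U 2) F t x w * pd (U (Suc m)) a2 t x w) - 0)"
  proof (intro lintop_diff lintop_add lintop_uminus)
    show "lintop (Suc (Suc m)) (Dt F a2) (\<lambda>t x w. pd (U 2) F t x w * pd (U (Suc m)) a2 t x w)"
      by (rule lintop_Dt[OF F da2]) simp
    show "lintop (Suc (Suc m)) (Dx b2) (\<lambda>t x w. 0 - 0 - 0 - pd (U 2) F t x w * pd (U (Suc m)) a2 t x w)"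
      by (rule lintop_Dx2[OF lb2])
    show "lintop (Suc (Suc m)) (\<lambda>t x w. 2 * a1 t x w * b3 t x w) (\<lambda>t x w. 0)"
      by (intro lintop_dep dep_mono[OF dep_mult[OF dep_mult[OF dep_const da1] db3]]) simp
  qed
  have a2n0: "pd (U (Suc m)) a2 t x w = 0" for t x w
  proof -
    have "- (?F2 t x w * pd (U (Suc m)) a2 t x w) + (0 - 0 - 0 - ?F2 t x w * pd (U (Suc m)) a2 t x w) - 0 = 0"
      by (rule lintop_zero[OF l2]) (use S2 in simp)
    then show ?thesis using F_nondeg by auto
  qed
  have da2': "depends_upto m a2"
    using dep_drop[of m a2] da2 pa2 a2n0 by metis
  have db2: "depends_upto (Suc m) b2"
  proof -
    have "depends_upto (Suc m) (\<lambda>t x w. pd (U 1) F t x w * a2 t x w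
               - 2 * Dx (pd (U 2) F) t x w * a2 t x w
               - 2 * (Dx r t x w / r t x w) * pd (U 2) F t x w * a2 t x w
               - pd (U 2) F t x w * Dx a2 t x w)"
      by (intro dep_diff dep_mult dep_divide dep_const dFv da2 dDxF2 dDxr dr Dx_dep[OF da2'])
    moreover have "b2 = (\<lambda>t x w. pd (U 1) F t x w * a2 t x w
               - 2 * Dx (pd (U 2) F) t x w * a2 t x w
               - 2 * (Dx r t x w / r t x w) * pd (U 2) F t x w * a2 t x w
               - pd (U 2) F t x w * Dx a2 t x w)" using b2e by (auto intro!: ext)
    ultimately show ?thesis by simp
  qed
  have pb3: "pd (U (Suc m)) b3 t x w = (2 * ?F2 t x w * a2 t x w) * pd (U (Suc m)) a1 t x w" for t x w
  proof -
    have "b3 = (\<lambda>t x w. (2 * ?F2 t x w * a2 t x w) * a1 t x w)" using b3e by (auto intro!: ext)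
    moreover have "pd (U (Suc m)) (\<lambda>t x w. (2 * ?F2 t x w * a2 t x w) * a1 t x w) t x w
        = (2 * ?F2 t x w * a2 t x w) * pd (U (Suc m)) a1 t x w"
      by (rule pd_cmult) (use pa1 in \<open>auto intro!: dep_mult dep_const dFv2 da2'\<close>)
    ultimately show ?thesis by simp
  qed
  define c where "c = (\<lambda>t x w. 1 / (2 * a2 t x w))"
  have dc: "depends_upto (Suc m) c" unfolding c_def by (intro dep_divide dep_mult dep_const da2)
  have b1e: "b1 t x w = (2 * a1 t x w * b2 t x w) * c t x w - Dx b3 t x w * c t x w" for t x w
  proof -
    have "Dx b3 t x w + 2 * a2 t x w * b1 t x w - 2 * a1 t x w * b2 t x w = 0" using S3 by blast
    then show ?thesis using a2_nz[rule_format, of t x w] unfolding c_def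
      by (simp add: field_simps)
  qed
  have lb1: "lintop (Suc m) b1 (\<lambda>t x w. 0 * c t x w - pd (U (Suc m)) b3 t x w * c t x w)"
    by (rule lintop_cong[OF _ b1e refl])
       (intro lintop_diff lintop_rmult lintop_dep lintop_Dx dc db3 dep_mult dep_const da1 db2)
  have l3: "lintop (Suc (Suc m)) (\<lambda>t x w. - Dt F a1 t x w + Dx b1 t x w + 2 * a2 t x w * b3 t x w)
      (\<lambda>t x w. - (pd (U 2) F t x w * pd (U (Suc m)) a1 t x w) + (0 * c t x w - pd (U (Suc m)) b3 t x w * c t x w) + 0)"
  proof (intro lintop_add lintop_uminus)
    show "lintop (Suc (Suc m)) (Dt F a1) (\<lambda>t x w. pd (U 2) F t x w * pd (U (Suc m)) a1 t x w)"
      by (rule lintop_Dt[OF F da1]) simp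
    show "lintop (Suc (Suc m)) (Dx b1) (\<lambda>t x w. 0 * c t x w - pd (U (Suc m)) b3 t x w * c t x w)"
      by (rule lintop_Dx2[OF lb1])
    show "lintop (Suc (Suc m)) (\<lambda>t x w. 2 * a2 t x w * b3 t x w) (\<lambda>t x w. 0)"
      by (intro lintop_dep dep_mono[OF dep_mult[OF dep_mult[OF dep_const da2] db3]]) simp
  qed
  have a1n0: "pd (U (Suc m)) a1 t x w = 0" for t x w
  proof -
    have "- (?F2 t x w * pd (U (Suc m)) a1 t x w) + (0 * c t x w - pd (U (Suc m)) b3 t x w * c t x w) + 0 = 0"
      by (rule lintop_zero[OF l3]) (use S1 in simp)
    then have "- (?F2 t x w * pd (U (Suc m)) a1 t x w) - ?F2 t x w * pd (U (Suc m)) a1 t x w = 0"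
      using a2_nz[rule_format, of t x w] unfolding pb3 c_def by (simp add: field_simps)
    then show ?thesis using F_nondeg by auto
  qed
  have da1': "depends_upto m a1"
    using dep_drop[of m a1] da1 pa1 a1n0 by metis
  show ?thesis using dr' da1' da2' by blast
qed


theorem proposition3:
  fixes F r a1 a2 b1 b2 b3 :: dfun
  assumes F_smooth: "smooth_dfun F"
    and F_order: "depends_upto 2 F"
    and F_nondeg: "\<forall>t x w. pd (U 2) F t x w \<noteq> 0"
    and smooth: "smooth_dfun r" "smooth_dfun a1" "smooth_dfun a2"
                "smooth_dfun b1" "smooth_dfun b2" "smooth_dfun b3"
    and r_nz: "\<forall>t x w. r t x w \<noteq> 0"
    and a2_nz: "\<forall>t x w. a2 t x w \<noteq> 0"
    and S1: "\<forall>t x w. - Dt F a1 t x w + Dx b1 t x w + 2 * a2 t x w * b3 t x w = 0"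
    and S2: "\<forall>t x w. - Dt F a2 t x w + Dx b2 t x w - 2 * a1 t x w * b3 t x w = 0"
    and S3: "\<forall>t x w. Dx b3 t x w + 2 * a2 t x w * b1 t x w - 2 * a1 t x w * b2 t x w = 0"
    and T1: "\<forall>t x w. - Dt F r t x w - pd (U 0) F t x w * r t x w
               + Dx (\<lambda>t x w. pd (U 1) F t x w * r t x w) t x w
               - Dx (Dx (\<lambda>t x w. pd (U 2) F t x w * r t x w)) t x w
               - 4 * pd (U 2) F t x w * r t x w * (a2 t x w)\<^sup>2 = 0"
    and T2: "\<forall>t x w. - b3 t x w + 2 * pd (U 2) F t x w * a1 t x w * a2 t x w = 0"
    and T3: "\<forall>t x w. - b2 t x w + pd (U 1) F t x w * a2 t x w
               - 2 * Dx (pd (U 2) F) t x w * a2 t x w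
               - 2 * (Dx r t x w / r t x w) * pd (U 2) F t x w * a2 t x w
               - pd (U 2) F t x w * Dx a2 t x w = 0"
  shows "depends_upto 2 r \<and> depends_upto 2 a1 \<and> depends_upto 2 a2 \<and> depends_upto 2 b3
         \<and> depends_upto 3 b1 \<and> depends_upto 3 b2"
proof -
  have pdf: "\<forall>v t x w. pdiffble v f t x w" if "smooth_dfun f" for f
    using that unfolding smooth_dfun_def by (metis foldr.simps(1) id_apply)
  have ex: "\<exists>N. depends_upto N f" if "smooth_dfun f" for f
    using that unfolding smooth_dfun_def by blast
  obtain N1 N2 N3 where n1: "depends_upto N1 r" and n2: "depends_upto N2 a1" and n3: "depends_upto N3 a2"
    using ex smooth by meson
  define P where "P = (\<lambda>n. depends_upto n r \<and> depends_upto n a1 \<and> depends_upto n a2)"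
  have stp: "P m" if "2 \<le> m" "P (Suc m)" for m
    using step[OF F_order F_nondeg pdf[OF smooth(1)] pdf[OF smooth(2)] pdf[OF smooth(3)] r_nz a2_nz
        S1 S2 S3 T1 T2 T3 that(1)] that(2) unfolding P_def by blast
  have desc: "P (2 + d) \<longrightarrow> P 2" for d
  proof (induction d)
    case 0 then show ?case by simp
  next
    case (Suc d)
    then show ?case using stp[of "2 + d"] by simp
  qed
  have "P (2 + (N1 + N2 + N3))"
    unfolding P_def using n1 n2 n3 by (auto elim: dep_mono)
  then have P2: "P 2" using desc by blast
  then have dr: "depends_upto 2 r" and da1: "depends_upto 2 a1" and da2: "depends_upto 2 a2"
    unfolding P_def by auto
  have dF2: "depends_upto 2 (pd v F)" for v by (rule pd_dep[OF F_order])
  have dF3: "depends_upto 3 (pd v F)" for v by (rule dep_mono[OF pd_dep[OF F_order]]) simp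
  have b3e: "b3 = (\<lambda>t x w. 2 * pd (U 2) F t x w * a1 t x w * a2 t x w)"
    using T2 by (auto intro!: ext)
  have db3: "depends_upto 2 b3" unfolding b3e by (intro dep_mult dep_const dF2 da1 da2)
  have s3: "Suc 2 = 3" by simp
  have dDxb3: "depends_upto 3 (Dx b3)" using Dx_dep[OF db3] by (simp only: s3)
  have dDxr: "depends_upto 3 (Dx r)" using Dx_dep[OF dr] by (simp only: s3)
  have dDxa2: "depends_upto 3 (Dx a2)" using Dx_dep[OF da2] by (simp only: s3)
  have dDxF2: "depends_upto 3 (Dx (pd (U 2) F))" using Dx_dep[OF dF2] by (simp only: s3)
  have d3: "depends_upto 3 f" if "depends_upto 2 f" for f using dep_mono[OF that] by simp
  have b2e: "b2 = (\<lambda>t x w. pd (U 1) F t x w * a2 t x w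
               - 2 * Dx (pd (U 2) F) t x w * a2 t x w
               - 2 * (Dx r t x w / r t x w) * pd (U 2) F t x w * a2 t x w
               - pd (U 2) F t x w * Dx a2 t x w)"
  proof (intro ext)
    fix t x w show "b2 t x w = pd (U 1) F t x w * a2 t x w
               - 2 * Dx (pd (U 2) F) t x w * a2 t x w
               - 2 * (Dx r t x w / r t x w) * pd (U 2) F t x w * a2 t x w
               - pd (U 2) F t x w * Dx a2 t x w"
      using T3[rule_format, of t x w] by linarith
  qed
  have db2: "depends_upto 3 b2" unfolding b2e
    by (intro dep_diff dep_mult dep_divide dep_const dF3 d3[OF da2] dDxF2 dDxr d3[OF dr] dDxa2)
  have b1e: "b1 = (\<lambda>t x w. (2 * a1 t x w * b2 t x w - Dx b3 t x w) / (2 * a2 t x w))"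
  proof (intro ext)
    fix t x w
    have "Dx b3 t x w + 2 * a2 t x w * b1 t x w - 2 * a1 t x w * b2 t x w = 0" using S3 by blast
    then show "b1 t x w = (2 * a1 t x w * b2 t x w - Dx b3 t x w) / (2 * a2 t x w)"
      using a2_nz[rule_format, of t x w] by (simp add: field_simps)
  qed
  have db1: "depends_upto 3 b1" unfolding b1e
    by (intro dep_diff dep_mult dep_divide dep_const d3[OF da1] d3[OF da2] db2 dDxb3)
  show ?thesis using dr da1 da2 db3 db1 db2 by blast
qed

end
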